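(* Let $r\ge 4$ and let $p_1,\dots,p_r$ be points in general position in $\mathbb{P}^3$ over an algebraically closed field of characteristic $0$. For integers $d\ge 0$ and $m_1,\dots,m_r\ge 0$, let $\mathcal{L}=\mathcal{L}_3(d,m_1,\dots,m_r)$ and put $k=2d-\sum_{i=1}^4 m_i$ and $$\mathrm{Cr}(\mathcal{L})=\mathcal{L}_3(d+k,\,m_1+k,\dots,m_4+k,\,m_5,\dots,m_r).$$ Suppose that $2d\ge m_i+m_j+m_k$ for every choice of three distinct indices $\{i,j,k\}\subset\{1,2,3,4\}$. For $1\le i<j\le 4$ set $t_{ij}=m_i+m_j-d$. Then $$v(\mathrm{Cr}(\mathcal{L}))-v(\mathcal{L})=\sum_{\substack{1\le i<j\le 4\\ t_{ij}\ge 2}}\binom{1+t_{ij}}{3}-\sum_{\substack{1\le i<j\le 4\\ t_{ij}\le -2}}\binom{1-t_{ij}}{3}.$$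
   Context: $\mathcal{L}_3(d,m_1,\dots,m_r)$ denotes the linear system of surfaces of degree $d$ in $\mathbb{P}^3$ passing through the general points $p_1,\dots,p_r$ with multiplicity at least $m_i$ at $p_i$. Its virtual dimension is $v(\mathcal{L}_3(d,m_1,\dots,m_r))=\binom{d+3}{3}-\sum_{i=1}^r\binom{m_i+2}{3}-1$. The system $\mathrm{Cr}(\mathcal{L})$ is the image of $\mathcal{L}$ under the cubo-cubic Cremona transformation $(x_0:x_1:x_2:x_3)\dashrightarrow(x_0^{-1}:x_1^{-1}:x_2^{-1}:x_3^{-1})$ with $p_1,\dots,p_4$ placed at the coordinate points. *)

theory Defs
  imports Main
begin

text \<open>Binomial coefficient with an integer top entry, used only for nonnegative tops
  (for negative tops we return 0; this case never arises in the theorem).\<close>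
definition ibinom :: "int \<Rightarrow> nat \<Rightarrow> int" where
  "ibinom n k = (if n < 0 then 0 else int (nat n choose k))"

definition vdim3 :: "int \<Rightarrow> (nat \<Rightarrow> int) \<Rightarrow> nat \<Rightarrow> int" where
  "vdim3 d m r = ibinom (d + 3) 3 - (\<Sum>i = 1..r. ibinom (m i + 2) 3) - 1"

definition cr_k :: "int \<Rightarrow> (nat \<Rightarrow> int) \<Rightarrow> int" where
  "cr_k d m = 2 * d - (\<Sum>i = 1..4. m i)"

definition cr_deg :: "int \<Rightarrow> (nat \<Rightarrow> int) \<Rightarrow> int" where
  "cr_deg d m = d + cr_k d m"

definition cr_mult :: "int \<Rightarrow> (nat \<Rightarrow> int) \<Rightarrow> nat \<Rightarrow> int" where
  "cr_mult d m i = (if 1 \<le> i \<and> i \<le> 4 then m i + cr_k d m else m i)"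

end

theory Submission
  imports Defs Complex_Main
begin

lemma choose3_nat: "6 * (n choose 3) = n * (n - 1) * (n - 2)"
proof (induction n)
  case 0 then show ?case by simp
next
  case (Suc n)
  have c2: "2 * (n choose 2) = n * (n - 1)" for n :: nat
  proof (induction n)
    case (Suc n) then show ?case by (cases n) (simp_all add: numeral_2_eq_2 algebra_simps)
  qed simp
  have "6 * (Suc n choose 3) = 6 * (n choose 2) + 6 * (n choose 3)"
    by (simp add: numeral_3_eq_3 numeral_2_eq_2)
  also have "\<dots> = 3 * (n * (n - 1)) + n * (n - 1) * (n - 2)" using c2 Suc by simp
  also have "\<dots> = Suc n * (Suc n - 1) * (Suc n - 2)"
    by (cases n; cases "n - 1"; simp add: algebra_simps)
  finally show ?case .
qed

lemma ibinom3_real: assumes "n \<ge> 0" shows "real_of_int (ibinom n 3) = (n * (n - 1) * (n - 2)) / 6"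
proof -
  note True = assms
  obtain a where a: "n = int a" using True nonneg_eq_int by blast
  have X: "real (a * (a - 1) * (a - 2)) = real a * (real a - 1) * (real a - 2)"
  proof -
    consider "a = 0" | "a = 1" | "a = 2" | "a \<ge> 3" by linarith
    then show ?thesis by cases (auto simp: of_nat_diff)
  qed
  have e1: "real (6 * (a choose 3)) = real a * (real a - 1) * (real a - 2)"
    using choose3_nat[of a] X by metis
  have "real_of_int (ibinom n 3) = real (a choose 3)" unfolding ibinom_def a by simp
  then show ?thesis using e1 a by simp
qed

lemma gpair: "real_of_int ((if t \<ge> 2 then ibinom (1 + t) 3 else 0) - (if t \<le> -2 then ibinom (1 - t) 3 else 0))
   = (t^3 - t) / 6"
proof -
  consider "t \<ge> 2" | "t \<le> -2" | "t = -1 \<or> t = 0 \<or> t = 1" by linarith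
  then show ?thesis
  proof cases
    case 1
    then show ?thesis by (simp add: ibinom3_real power3_eq_cube algebra_simps)
  next
    case 2
    then show ?thesis by (simp add: ibinom3_real power3_eq_cube field_simps)
  next
    case 3
    then show ?thesis by auto
  qed
qed

lemma pairset: "{(i, j). 1 \<le> i \<and> i < j \<and> j \<le> (4::nat) \<and> P i j}
  = {p \<in> {(1,2),(1,3),(1,4),(2,3),(2,4),(3,4)}. P (fst p) (snd p)}"
  by auto

lemma sum_pairs: "(\<Sum>(i,j)\<in>{(i,j). 1 \<le> i \<and> i < j \<and> j \<le> (4::nat) \<and> P i j}. f i j :: int)
  = (if P 1 2 then f 1 2 else 0) + (if P 1 3 then f 1 3 else 0) + (if P 1 4 then f 1 4 else 0)
  + (if P 2 3 then f 2 3 else 0) + (if P 2 4 then f 2 4 else 0) + (if P 3 4 then f 3 4 else 0)"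
  unfolding pairset
  apply (subst sum.inter_filter)
   apply simp
  apply (simp add: case_prod_beta)
  done

theorem mainTheorem1:
  fixes d :: int and m :: "nat \<Rightarrow> int" and r :: nat
  assumes "r \<ge> 4"
    and "d \<ge> 0"
    and "\<forall>i\<in>{1..r}. m i \<ge> 0"
    and "\<forall>i j l. {i, j, l} \<subseteq> {1..4} \<and> i \<noteq> j \<and> i \<noteq> l \<and> j \<noteq> l
            \<longrightarrow> 2 * d \<ge> m i + m j + m l"
  shows "vdim3 (cr_deg d m) (cr_mult d m) r - vdim3 d m r
       = (\<Sum>(i, j) \<in> {(i, j). 1 \<le> i \<and> i < j \<and> j \<le> (4::nat) \<and> m i + m j - d \<ge> 2}.
             ibinom (1 + (m i + m j - d)) 3)
       - (\<Sum>(i, j) \<in> {(i, j). 1 \<le> i \<and> i < j \<and> j \<le> (4::nat) \<and> m i + m j - d \<le> -2}.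
             ibinom (1 - (m i + m j - d)) 3)"
proof -
  have m1: "m 1 \<ge> 0" and m2: "m 2 \<ge> 0" and m3: "m 3 \<ge> 0" and m4: "m 4 \<ge> 0"
    using assms(1,3) by auto
  have t1: "2 * d \<ge> m 2 + m 3 + m 4" using assms(4)[rule_format, of 2 3 4] by auto
  have t2: "2 * d \<ge> m 1 + m 3 + m 4" using assms(4)[rule_format, of 1 3 4] by auto
  have t3: "2 * d \<ge> m 1 + m 2 + m 4" using assms(4)[rule_format, of 1 2 4] by auto
  have t4: "2 * d \<ge> m 1 + m 2 + m 3" using assms(4)[rule_format, of 1 2 3] by auto
  have s4: "{1..4::nat} = {1,2,3,4}" by auto
  have k: "cr_k d m = 2 * d - (m 1 + m 2 + m 3 + m 4)" unfolding cr_k_def s4 by simp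
  have split: "{1..r} = {1..4} \<union> {5..r}" using assms(1) by auto
  have rest: "(\<Sum>i = 5..r. ibinom (cr_mult d m i + 2) 3) = (\<Sum>i = 5..r. ibinom (m i + 2) 3)"
    by (rule sum.cong) (auto simp: cr_mult_def)
  have sumcr: "(\<Sum>i = 1..r. ibinom (cr_mult d m i + 2) 3)
     = (\<Sum>i\<in>{1,2,3,4}. ibinom (cr_mult d m i + 2) 3) + (\<Sum>i = 5..r. ibinom (m i + 2) 3)"
    unfolding split s4 by (subst sum.union_disjoint) (auto simp: rest)
  have summ: "(\<Sum>i = 1..r. ibinom (m i + 2) 3)
     = (\<Sum>i\<in>{1,2,3,4}. ibinom (m i + 2) 3) + (\<Sum>i = 5..r. ibinom (m i + 2) 3)"
    unfolding split s4 by (subst sum.union_disjoint) auto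
  define K where "K = 2 * d - (m 1 + m 2 + m 3 + m 4)"
  have L: "vdim3 (cr_deg d m) (cr_mult d m) r - vdim3 d m r =
     ibinom (d + K + 3) 3 - ibinom (d + 3) 3
     - (ibinom (m 1 + K + 2) 3 + ibinom (m 2 + K + 2) 3 + ibinom (m 3 + K + 2) 3 + ibinom (m 4 + K + 2) 3)
     + (ibinom (m 1 + 2) 3 + ibinom (m 2 + 2) 3 + ibinom (m 3 + 2) 3 + ibinom (m 4 + 2) 3)"
    unfolding vdim3_def sumcr summ cr_deg_def k K_def by (simp add: cr_mult_def k)
  define g where "g t = (if t \<ge> 2 then ibinom (1 + t) 3 else 0) - (if t \<le> -2 then ibinom (1 - t) 3 else 0)" for t :: int
  define t where "t i j = m i + m j - d" for i j
  have R: "(\<Sum>(i, j) \<in> {(i, j). 1 \<le> i \<and> i < j \<and> j \<le> (4::nat) \<and> m i + m j - d \<ge> 2}.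
             ibinom (1 + (m i + m j - d)) 3)
       - (\<Sum>(i, j) \<in> {(i, j). 1 \<le> i \<and> i < j \<and> j \<le> (4::nat) \<and> m i + m j - d \<le> -2}.
             ibinom (1 - (m i + m j - d)) 3)
     = g (t 1 2) + g (t 1 3) + g (t 1 4) + g (t 2 3) + g (t 2 4) + g (t 3 4)"
    unfolding sum_pairs g_def t_def by simp
  have K0: "d + K \<ge> 0" using t1 t2 t3 t4 assms(2) unfolding K_def by linarith
  have "real_of_int (ibinom (d + K + 3) 3 - ibinom (d + 3) 3
     - (ibinom (m 1 + K + 2) 3 + ibinom (m 2 + K + 2) 3 + ibinom (m 3 + K + 2) 3 + ibinom (m 4 + K + 2) 3)
     + (ibinom (m 1 + 2) 3 + ibinom (m 2 + 2) 3 + ibinom (m 3 + 2) 3 + ibinom (m 4 + 2) 3))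
     = real_of_int (g (t 1 2) + g (t 1 3) + g (t 1 4) + g (t 2 3) + g (t 2 4) + g (t 3 4))"
    using K0 m1 m2 m3 m4 t1 t2 t3 t4 assms(2)
    apply (simp only: of_int_add of_int_diff gpair[folded g_def])
    apply (subst ibinom3_real, simp add: K_def)+
    apply (simp add: K_def t_def power3_eq_cube field_simps)
    done
  then show ?thesis using L R by (simp only: of_int_eq_iff)
qed

end
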